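(* Let $m=2$ attributes take values in $\{1,\dots,d\}$, let $\mathcal{Z}^{\mathsf{train}}\subseteq\{1,\dots,d\}^2$, and consider the graph on $\mathcal{Z}^{\mathsf{train}}$ in which two attribute vectors are adjacent iff their Hamming distance is one. Let $C_1,\dots,C_K$ be the maximal connected components of this graph, so $\mathcal{Z}^{\mathsf{train}}=C_1\cup\dots\cup C_K$. Then: (i) if a connected component $C$ is contiguous, then $\mathsf{DAff}(C)$ equals the smallest subgrid containing $C$; (ii) if $C_1,\dots,C_K$ are all contiguous, then $\mathsf{DAff}(C_1\cup\dots\cup C_K)$ equals the union over $j$ of the smallest subgrids containing $C_j$.
   Context: For $z=(z_1,z_2)$, $\sigma(z)\in\{0,1\}^{2d}$ is the concatenation of the one-hot encodings of $z_1,z_2$, and for finite $\mathcal{A}=\{z^{(1)},\dots,z^{(k)}\}\subseteq\{1,\dots,d\}^2$, $\mathsf{DAff}(\mathcal{A})=\{z\in\{1,\dots,d\}^2:\exists\alpha\in\mathbb{R}^k,\ \sum_i\alpha_i=1,\ \sigma(z)=\sum_i\alpha_i\sigma(z^{(i)})\}$. A set $C$ is contiguous if for each coordinate $j\in\{1,2\}$, with $\min_j,\max_j$ the smallest and largest values of the $j$-th coordinate over $C$, every value in $\{\min_j,\min_j+1,\dots,\max_j\}$ is taken by the $j$-th coordinate of some point of $C$. The smallest subgrid containing such $C$ is $\{\min_1,\dots,\max_1\}\times\{\min_2,\dots,\max_2\}$. *)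

theory Defs
  imports Complex_Main
begin

type_synonym attr = "nat \<times> nat"

text \<open>sigma(z) in {0,1}^{2d}: coordinates 1..d one-hot encode z_1, coordinates d+1..2d one-hot encode z_2
  (all other indices are 0).\<close>
definition sigma :: "nat \<Rightarrow> attr \<Rightarrow> nat \<Rightarrow> real" where
  "sigma d z i = (if i = fst z then 1 else 0) + (if i = d + snd z then 1 else 0)"

definition grid :: "nat \<Rightarrow> attr set" where
  "grid d = {1..d} \<times> {1..d}"

definition DAff :: "nat \<Rightarrow> attr set \<Rightarrow> attr set" where
  "DAff d A = {z \<in> grid d. \<exists>\<alpha> :: attr \<Rightarrow> real. (\<Sum>a\<in>A. \<alpha> a) = 1 \<and>
                 (\<forall>i. sigma d z i = (\<Sum>a\<in>A. \<alpha> a * sigma d a i))}"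

definition hamming1 :: "attr \<Rightarrow> attr \<Rightarrow> bool" where
  "hamming1 z w \<longleftrightarrow> (fst z = fst w \<and> snd z \<noteq> snd w) \<or> (fst z \<noteq> fst w \<and> snd z = snd w)"

definition adjZ :: "attr set \<Rightarrow> attr \<Rightarrow> attr \<Rightarrow> bool" where
  "adjZ Z z w \<longleftrightarrow> z \<in> Z \<and> w \<in> Z \<and> hamming1 z w"

definition component :: "attr set \<Rightarrow> attr set \<Rightarrow> bool" where
  "component Z C \<longleftrightarrow> (\<exists>z\<in>Z. C = {w. (adjZ Z)\<^sup>*\<^sup>* z w})"

definition contiguous :: "attr set \<Rightarrow> bool" where
  "contiguous C \<longleftrightarrow>
     (\<forall>v. Min (fst ` C) \<le> v \<and> v \<le> Max (fst ` C) \<longrightarrow> v \<in> fst ` C) \<and>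
     (\<forall>v. Min (snd ` C) \<le> v \<and> v \<le> Max (snd ` C) \<longrightarrow> v \<in> snd ` C)"

definition subgrid :: "attr set \<Rightarrow> attr set" where
  "subgrid C = {Min (fst ` C)..Max (fst ` C)} \<times> {Min (snd ` C)..Max (snd ` C)}"

end

theory Submission
  imports Defs
begin

lemma finite_grid: "finite (grid d)"
  by (simp add: grid_def)

lemma sigma_row:
  assumes "a \<in> grid d" "r \<in> {1..d}"
  shows "sigma d a r = (if fst a = r then 1 else 0)"
  using assms by (auto simp: sigma_def grid_def)

lemma sigma_col:
  assumes "a \<in> grid d" "c \<in> {1..d}"
  shows "sigma d a (d + c) = (if snd a = c then 1 else 0)"
  using assms by (auto simp: sigma_def grid_def)

lemma row_sum:
  assumes A: "A \<subseteq> grid d" "finite A" and z: "z \<in> grid d"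
    and eq: "\<forall>i. sigma d z i = (\<Sum>a\<in>A. \<alpha> a * sigma d a i)"
    and R: "R \<subseteq> {1..d}"
  shows "(\<Sum>a\<in>A. if fst a \<in> R then \<alpha> a else 0) = (if fst z \<in> R then 1 else 0)"
proof -
  have fR: "finite R" using R finite_subset by blast
  have one: "(\<Sum>a\<in>A. if fst a = r then \<alpha> a else 0) = (if fst z = r then 1 else 0)"
    if "r \<in> R" for r
  proof -
    have r: "r \<in> {1..d}" using that R by auto
    have "sigma d z r = (\<Sum>a\<in>A. \<alpha> a * sigma d a r)" using eq by blast
    also have "\<dots> = (\<Sum>a\<in>A. if fst a = r then \<alpha> a else 0)"
      by (rule sum.cong) (use A r sigma_row in auto)
    finally show ?thesis using sigma_row[OF z r] by simp
  qed
  have "(\<Sum>a\<in>A. if fst a \<in> R then \<alpha> a else 0) = (\<Sum>a\<in>A. \<Sum>r\<in>R. if fst a = r then \<alpha> a else 0)"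
    by (rule sum.cong) (simp_all add: fR)
  also have "\<dots> = (\<Sum>r\<in>R. \<Sum>a\<in>A. if fst a = r then \<alpha> a else 0)"
    by (rule sum.swap)
  also have "\<dots> = (\<Sum>r\<in>R. if fst z = r then 1 else 0)"
    by (rule sum.cong) (simp_all add: one)
  also have "\<dots> = (if fst z \<in> R then 1 else 0)" by (simp add: fR)
  finally show ?thesis .
qed

lemma col_sum:
  assumes A: "A \<subseteq> grid d" "finite A" and z: "z \<in> grid d"
    and eq: "\<forall>i. sigma d z i = (\<Sum>a\<in>A. \<alpha> a * sigma d a i)"
    and R: "R \<subseteq> {1..d}"
  shows "(\<Sum>a\<in>A. if snd a \<in> R then \<alpha> a else 0) = (if snd z \<in> R then 1 else 0)"
proof -
  have fR: "finite R" using R finite_subset by blast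
  have one: "(\<Sum>a\<in>A. if snd a = r then \<alpha> a else 0) = (if snd z = r then 1 else 0)"
    if "r \<in> R" for r
  proof -
    have r: "r \<in> {1..d}" using that R by auto
    have "sigma d z (d + r) = (\<Sum>a\<in>A. \<alpha> a * sigma d a (d + r))" using eq by blast
    also have "\<dots> = (\<Sum>a\<in>A. if snd a = r then \<alpha> a else 0)"
      by (rule sum.cong) (use A r sigma_col in auto)
    finally show ?thesis using sigma_col[OF z r] by simp
  qed
  have "(\<Sum>a\<in>A. if snd a \<in> R then \<alpha> a else 0) = (\<Sum>a\<in>A. \<Sum>r\<in>R. if snd a = r then \<alpha> a else 0)"
    by (rule sum.cong) (simp_all add: fR)
  also have "\<dots> = (\<Sum>r\<in>R. \<Sum>a\<in>A. if snd a = r then \<alpha> a else 0)"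
    by (rule sum.swap)
  also have "\<dots> = (\<Sum>r\<in>R. if snd z = r then 1 else 0)"
    by (rule sum.cong) (simp_all add: one)
  also have "\<dots> = (if snd z \<in> R then 1 else 0)" by (simp add: fR)
  finally show ?thesis .
qed

lemma DAff_fst:
  assumes A: "A \<subseteq> grid d" "finite A" and z: "z \<in> DAff d A"
  shows "fst z \<in> fst ` A \<and> snd z \<in> snd ` A"
proof -
  from z obtain \<alpha> where zg: "z \<in> grid d" and eq: "\<forall>i. sigma d z i = (\<Sum>a\<in>A. \<alpha> a * sigma d a i)"
    unfolding DAff_def by blast
  have r: "fst z \<in> {1..d}" "snd z \<in> {1..d}" using zg by (auto simp: grid_def)
  have s1: "(\<Sum>a\<in>A. if fst a \<in> {fst z} then \<alpha> a else 0) = 1"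
    using row_sum[OF A zg eq, of "{fst z}"] r by simp
  have s2: "(\<Sum>a\<in>A. if snd a \<in> {snd z} then \<alpha> a else 0) = 1"
    using col_sum[OF A zg eq, of "{snd z}"] r by simp
  have "fst z \<in> fst ` A"
  proof (rule ccontr)
    assume "fst z \<notin> fst ` A"
    then have "(\<Sum>a\<in>A. if fst a \<in> {fst z} then \<alpha> a else 0) = 0"
      by (intro sum.neutral) (auto simp: image_iff)
    with s1 show False by simp
  qed
  moreover have "snd z \<in> snd ` A"
  proof (rule ccontr)
    assume "snd z \<notin> snd ` A"
    then have "(\<Sum>a\<in>A. if snd a \<in> {snd z} then \<alpha> a else 0) = 0"
      by (intro sum.neutral) (auto simp: image_iff)
    with s2 show False by simp
  qed
  ultimately show ?thesis by blast
qed

lemma DAff_refl: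
  assumes A: "A \<subseteq> grid d" "finite A" and z: "z \<in> A"
  shows "z \<in> DAff d A"
proof -
  have "z \<in> grid d" using A z by blast
  moreover have "(\<Sum>a\<in>A. (\<lambda>a. if a = z then 1 else 0) a) = (1::real)"
    using A z by simp
  moreover have "\<forall>i. sigma d z i = (\<Sum>a\<in>A. (\<lambda>a. if a = z then 1 else 0) a * sigma d a i)"
  proof
    fix i
    have "(\<Sum>a\<in>A. (if a = z then 1 else 0) * sigma d a i) = (\<Sum>a\<in>A. if a = z then sigma d a i else 0)"
      by (rule sum.cong) auto
    then show "sigma d z i = (\<Sum>a\<in>A. (\<lambda>a. if a = z then 1 else 0) a * sigma d a i)"
      using A z by (simp add: sum.delta')
  qed
  ultimately show ?thesis unfolding DAff_def by blast
qed

lemma DAff_rect: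
  assumes x: "x \<in> DAff d A" and y: "y \<in> DAff d A" and w: "w \<in> DAff d A"
    and v: "v \<in> grid d" and eq: "\<forall>i. sigma d v i = sigma d x i - sigma d y i + sigma d w i"
  shows "v \<in> DAff d A"
proof -
  obtain ax where ax: "(\<Sum>a\<in>A. ax a) = 1" "\<forall>i. sigma d x i = (\<Sum>a\<in>A. ax a * sigma d a i)"
    using x unfolding DAff_def by blast
  obtain ay where ay: "(\<Sum>a\<in>A. ay a) = 1" "\<forall>i. sigma d y i = (\<Sum>a\<in>A. ay a * sigma d a i)"
    using y unfolding DAff_def by blast
  obtain aw where aw: "(\<Sum>a\<in>A. aw a) = 1" "\<forall>i. sigma d w i = (\<Sum>a\<in>A. aw a * sigma d a i)"
    using w unfolding DAff_def by blast
  define b where "b = (\<lambda>a. ax a - ay a + aw a)"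
  have "(\<Sum>a\<in>A. b a) = 1"
    using ax ay aw by (simp add: b_def sum.distrib sum_subtractf)
  moreover have "\<forall>i. sigma d v i = (\<Sum>a\<in>A. b a * sigma d a i)"
  proof
    fix i
    have "(\<Sum>a\<in>A. b a * sigma d a i) = (\<Sum>a\<in>A. ax a * sigma d a i) - (\<Sum>a\<in>A. ay a * sigma d a i) + (\<Sum>a\<in>A. aw a * sigma d a i)"
      by (simp add: b_def algebra_simps sum.distrib sum_subtractf)
    then show "sigma d v i = (\<Sum>a\<in>A. b a * sigma d a i)" using eq ax ay aw by simp
  qed
  ultimately show ?thesis using v unfolding DAff_def by blast
qed

lemma DAff_rect2:
  assumes "(r, c) \<in> DAff d A" "(r', c) \<in> DAff d A" "(r', c') \<in> DAff d A" "(r, c') \<in> grid d"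
  shows "(r, c') \<in> DAff d A"
  by (rule DAff_rect[OF assms(1,2,3,4)]) (simp add: sigma_def)

lemma DAff_mono:
  assumes "A \<subseteq> B" "finite B"
  shows "DAff d A \<subseteq> DAff d B"
proof
  fix z assume "z \<in> DAff d A"
  then obtain \<alpha> where z: "z \<in> grid d" "(\<Sum>a\<in>A. \<alpha> a) = 1" "\<forall>i. sigma d z i = (\<Sum>a\<in>A. \<alpha> a * sigma d a i)"
    unfolding DAff_def by blast
  define \<beta> where "\<beta> = (\<lambda>a. if a \<in> A then \<alpha> a else 0)"
  have fA: "finite A" using assms finite_subset by blast
  have "(\<Sum>a\<in>B. \<beta> a) = (\<Sum>a\<in>A. \<alpha> a)"
    unfolding \<beta>_def using assms sum.inter_restrict[of B \<alpha> A]
    by (metis Int_absorb1 Int_commute)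
  moreover have "(\<Sum>a\<in>B. \<beta> a * sigma d a i) = (\<Sum>a\<in>A. \<alpha> a * sigma d a i)" for i
  proof -
    have "(\<Sum>a\<in>B. \<beta> a * sigma d a i) = (\<Sum>a\<in>B. if a \<in> A then \<alpha> a * sigma d a i else 0)"
      by (rule sum.cong) (auto simp: \<beta>_def)
    then show ?thesis using assms sum.inter_restrict[of B "\<lambda>a. \<alpha> a * sigma d a i" A]
      by (metis Int_absorb1 Int_commute)
  qed
  ultimately show "z \<in> DAff d B" using z unfolding DAff_def by auto
qed


lemma reach_in_Z:
  assumes "(adjZ Z)\<^sup>*\<^sup>* z w" "z \<in> Z"
  shows "w \<in> Z"
  using assms by (induction rule: rtranclp_induct) (auto simp: adjZ_def)

lemma comp_closed:
  assumes "(adjZ Z)\<^sup>*\<^sup>* z0 u" "z0 \<in> Z" "w \<in> Z" "fst u = fst w \<or> snd u = snd w"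
  shows "(adjZ Z)\<^sup>*\<^sup>* z0 w"
proof (cases "u = w")
  case True then show ?thesis using assms by simp
next
  case False
  have "u \<in> Z" using reach_in_Z assms by blast
  then have "adjZ Z u w" using False assms by (auto simp: adjZ_def hamming1_def prod_eq_iff)
  then show ?thesis using assms(1) by (meson rtranclp.rtrancl_into_rtrancl)
qed

lemma comp_basic:
  assumes "Z \<subseteq> grid d" "component Z C"
  shows "C \<subseteq> Z" "finite C" "C \<noteq> {}" "C \<subseteq> grid d"
proof -
  obtain z0 where z0: "z0 \<in> Z" "C = {w. (adjZ Z)\<^sup>*\<^sup>* z0 w}" using assms unfolding component_def by blast
  show "C \<subseteq> Z" using z0 reach_in_Z by blast
  then show "C \<subseteq> grid d" using assms by blast
  then show "finite C" using finite_grid finite_subset by blast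
  have "z0 \<in> C" using z0 by simp
  then show "C \<noteq> {}" by blast
qed

lemma comp_rect:
  assumes Zg: "Z \<subseteq> grid d" and comp: "component Z C"
  shows "DAff d C = fst ` C \<times> snd ` C"
proof
  note cb = comp_basic[OF Zg comp]
  show "DAff d C \<subseteq> fst ` C \<times> snd ` C"
    using DAff_fst[OF cb(4) cb(2)] by (auto simp: mem_Times_iff)
  obtain z0 where z0: "z0 \<in> Z" "C = {w. (adjZ Z)\<^sup>*\<^sup>* z0 w}" using comp unfolding component_def by blast
  have inD: "a \<in> DAff d C" if "a \<in> C" for a using DAff_refl[OF cb(4) cb(2) that] .
  have z0C: "z0 \<in> C" using z0 by simp
  have gr: "(x, y) \<in> grid d" if "x \<in> fst ` C" "y \<in> snd ` C" for x y
    using that cb(4) by (auto simp: grid_def)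
  have key: "(fst z0, snd v) \<in> DAff d C \<and> (fst v, snd z0) \<in> DAff d C" if "(adjZ Z)\<^sup>*\<^sup>* z0 v" for v
    using that
  proof (induction rule: rtranclp_induct)
    case base
    then show ?case using inD[OF z0C] by simp
  next
    case (step v v')
    have vC: "v \<in> C" "v' \<in> C" using step z0 by (auto intro: rtranclp.rtrancl_into_rtrancl)
    have vD: "(fst v, snd v) \<in> DAff d C" "(fst v', snd v') \<in> DAff d C" using inD vC by auto
    have h: "hamming1 v v'" using step(2) by (simp add: adjZ_def)
    show ?case
    proof (cases "fst v = fst v'")
      case True
      have "(fst z0, snd v') \<in> DAff d C"
        by (rule DAff_rect2[of _ "snd v" _ _ "fst v"]) (use step.IH vD True z0C vC gr in auto)
      then show ?thesis using step.IH True by simp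
    next
      case False
      then have "snd v = snd v'" using h by (simp add: hamming1_def)
      have "(fst v', snd z0) \<in> DAff d C"
        by (rule DAff_rect2[of _ "snd v'" _ _ "fst v"]) (use step.IH vD \<open>snd v = snd v'\<close> z0C vC gr in auto)
      then show ?thesis using step.IH \<open>snd v = snd v'\<close> by simp
    qed
  qed
  show "fst ` C \<times> snd ` C \<subseteq> DAff d C"
  proof safe
    fix u v assume uv: "u \<in> C" "v \<in> C"
    have "(fst u, snd z0) \<in> DAff d C" using key uv z0 by auto
    moreover have "(fst z0, snd v) \<in> DAff d C" using key uv z0 by auto
    ultimately show "(fst u, snd v) \<in> DAff d C"
      using DAff_rect2[of "fst u" "snd z0" d C "fst z0" "snd v"] inD[OF z0C] gr uv by auto
  qed
qed

lemma comp_sub_grid: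
  assumes Zg: "Z \<subseteq> grid d" and comp: "component Z C" and con: "contiguous C"
  shows "DAff d C = subgrid C"
proof -
  note cb = comp_basic[OF Zg comp]
  have iv: "f ` C = {Min (f ` C)..Max (f ` C)}" if "\<forall>v. Min (f ` C) \<le> v \<and> v \<le> Max (f ` C) \<longrightarrow> v \<in> f ` C"
    for f :: "attr \<Rightarrow> nat"
  proof
    have fi: "finite (f ` C)" using cb(2) by simp
    show "f ` C \<subseteq> {Min (f ` C)..Max (f ` C)}"
    proof
      fix x assume x: "x \<in> f ` C"
      have "Min (f ` C) \<le> x" using fi x by (rule Min_le)
      moreover have "x \<le> Max (f ` C)" using fi x by (rule Max_ge)
      ultimately show "x \<in> {Min (f ` C)..Max (f ` C)}" by simp
    qed
    show "{Min (f ` C)..Max (f ` C)} \<subseteq> f ` C" using that by auto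
  qed
  have "fst ` C = {Min (fst ` C)..Max (fst ` C)}" "snd ` C = {Min (snd ` C)..Max (snd ` C)}"
    using iv con unfolding contiguous_def by blast+
  then show ?thesis using comp_rect[OF Zg comp] unfolding subgrid_def by simp
qed

lemma union_comp:
  assumes "Z \<subseteq> grid d"
  shows "\<Union>{C. component Z C} = Z"
proof
  show "\<Union>{C. component Z C} \<subseteq> Z" using comp_basic[OF assms] by blast
  show "Z \<subseteq> \<Union>{C. component Z C}"
  proof
    fix z assume "z \<in> Z"
    then have "component Z {w. (adjZ Z)\<^sup>*\<^sup>* z w}" unfolding component_def by blast
    then show "z \<in> \<Union>{C. component Z C}" by blast
  qed
qed

lemma DAff_Z:
  assumes Zg: "Z \<subseteq> grid d" and z: "z \<in> DAff d Z"
  shows "\<exists>C. component Z C \<and> z \<in> fst ` C \<times> snd ` C"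
proof -
  have fZ: "finite Z" using Zg finite_grid finite_subset by blast
  from z obtain \<alpha> where zg: "z \<in> grid d" and eq: "\<forall>i. sigma d z i = (\<Sum>a\<in>Z. \<alpha> a * sigma d a i)"
    unfolding DAff_def by blast
  obtain a where a: "a \<in> Z" "fst a = fst z" using DAff_fst[OF Zg fZ z] by auto
  define C where "C = {w. (adjZ Z)\<^sup>*\<^sup>* a w}"
  have comp: "component Z C" using a unfolding C_def component_def by blast
  note cb = comp_basic[OF Zg comp]
  have Rg: "fst ` C \<subseteq> {1..d}" "snd ` C \<subseteq> {1..d}" using cb(4) by (auto simp: grid_def)
  have iff1: "fst w \<in> fst ` C \<longleftrightarrow> w \<in> C" if "w \<in> Z" for w
    using comp_closed[of Z a _ w] that a unfolding C_def by auto
  have iff2: "snd w \<in> snd ` C \<longleftrightarrow> w \<in> C" if "w \<in> Z" for w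
    using comp_closed[of Z a _ w] that a unfolding C_def by auto
  have aC: "a \<in> C" unfolding C_def by simp
  have fzC: "fst z \<in> fst ` C" using aC a(2) by (metis image_eqI)
  have "(\<Sum>w\<in>Z. if fst w \<in> fst ` C then \<alpha> w else 0) = 1"
    using row_sum[OF Zg fZ zg eq Rg(1)] fzC by simp
  moreover have "(\<Sum>w\<in>Z. if fst w \<in> fst ` C then \<alpha> w else 0) = (\<Sum>w\<in>Z. if snd w \<in> snd ` C then \<alpha> w else 0)"
    by (rule sum.cong) (use iff1 iff2 in auto)
  moreover have "(\<Sum>w\<in>Z. if snd w \<in> snd ` C then \<alpha> w else 0) = (if snd z \<in> snd ` C then 1 else 0)"
    using col_sum[OF Zg fZ zg eq Rg(2)] .
  ultimately have "snd z \<in> snd ` C" by (auto split: if_splits)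
  moreover note fzC
  ultimately show ?thesis using comp by (auto simp: mem_Times_iff)
qed

theorem theorem9:
  fixes d :: nat and Z :: "attr set"
  assumes "Z \<subseteq> grid d"
  shows "(\<forall>C. component Z C \<and> contiguous C \<longrightarrow> DAff d C = subgrid C)
       \<and> ((\<forall>C. component Z C \<longrightarrow> contiguous C) \<longrightarrow>
            DAff d (\<Union>{C. component Z C}) = (\<Union>{subgrid C | C. component Z C}))"
proof (intro conjI allI impI)
  fix C assume "component Z C \<and> contiguous C"
  then show "DAff d C = subgrid C" using comp_sub_grid[OF assms] by blast
next
  assume con: "\<forall>C. component Z C \<longrightarrow> contiguous C"
  have fZ: "finite Z" using assms finite_grid finite_subset by blast
  show "DAff d (\<Union>{C. component Z C}) = (\<Union>{subgrid C | C. component Z C})"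
    unfolding union_comp[OF assms]
  proof
    show "DAff d Z \<subseteq> \<Union>{subgrid C | C. component Z C}"
    proof
      fix z assume "z \<in> DAff d Z"
      then obtain C where C: "component Z C" "z \<in> fst ` C \<times> snd ` C" using DAff_Z[OF assms] by blast
      then have "z \<in> subgrid C" using comp_rect[OF assms C(1)] comp_sub_grid[OF assms C(1)] con by auto
      then show "z \<in> \<Union>{subgrid C | C. component Z C}" using C(1) by blast
    qed
    show "\<Union>{subgrid C | C. component Z C} \<subseteq> DAff d Z"
    proof clarify
      fix z C assume "z \<in> subgrid C" "component Z C"
      then show "z \<in> DAff d Z"
        using comp_sub_grid[OF assms] con DAff_mono[OF comp_basic(1)[OF assms] fZ] by blast
    qed
  qed
qed

end
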